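(* Under any feasible prescription strategy, the local state $X_t^1$ and the local mode $M_t^1$ are conditionally independent given the common information $H_t^0$.
   Context: Two-plant switched linear system $X_{t+1}=A(M_t^{0:1})X_t+B(M_t^{0:1})U_t+W_t$, $t=0,\dots,T$, with global/local states $X_t^0,X_t^1$, global/local modes $M_t^0,M_t^1$ (finite sets), actions $U_t^0,U_t^1$; the random variables $X_0^n$, $W_t^n$, $M_t^n$ ($n=0,1$, all $t$) are mutually independent (in particular the modes are independent over time and of each other). Packet-drop indicator $\Gamma_t$ i.i.d. Bernoulli, independent of everything else; $Z_t=X_t^1$, $\tilde Z_t=M_t^1$ if $\Gamma_t=1$ and $Z_t=\tilde Z_t=\emptyset$ if $\Gamma_t=0$. Common information $H_t^0=\{X_{0:t}^0,M_{0:t}^0,Z_{0:t},\tilde Z_{0:t},U_{0:t-1}^0\}$. A feasible prescription strategy chooses, as functions of $H_t^0$, the global action $U_t^0$ and a measurable map $\rho_t$ with $U_t^1=\rho_t(X_t^1,M_t^1)$, such that all states and actions have finite second moments. *)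

theory Defs
  imports "HOL-Probability.Probability"
begin

definition stack :: "'a ^ 'n0 \<Rightarrow> 'a ^ 'n1 \<Rightarrow> 'a ^ ('n0 + 'n1)" where
  "stack x0 x1 = (\<chi> i. case i of Inl a \<Rightarrow> x0 $ a | Inr b \<Rightarrow> x1 $ b)"

definition gen_sets :: "'w measure \<Rightarrow> ('w \<Rightarrow> 'b) \<Rightarrow> 'b measure \<Rightarrow> 'w set set" where
  "gen_sets M f N = {f -` A \<inter> space M | A. A \<in> sets N}"

definition option_measure :: "'b measure \<Rightarrow> 'b option measure" where
  "option_measure N = sigma UNIV (insert {None} ((\<lambda>B. Some ` B) ` sets N))"

(* Packet-drop channel output: Z = value if Gamma, otherwise empty symbol *)
definition chan :: "('w \<Rightarrow> bool) \<Rightarrow> ('w \<Rightarrow> 'b) \<Rightarrow> 'w \<Rightarrow> 'b option" where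
  "chan G Y = (\<lambda>\<omega>. if G \<omega> then Some (Y \<omega>) else None)"

(* Common information H_t^0 = {X^0_{0:t}, M^0_{0:t}, Z_{0:t}, Ztilde_{0:t}, U^0_{0:t-1}}
   as the sigma-algebra on the sample space generated by these random variables. *)
definition common_info ::
  "'w measure \<Rightarrow> (nat \<Rightarrow> 'w \<Rightarrow> real ^ 'n0) \<Rightarrow> (nat \<Rightarrow> 'w \<Rightarrow> 'm0)
   \<Rightarrow> (nat \<Rightarrow> 'w \<Rightarrow> real ^ 'n1) \<Rightarrow> (nat \<Rightarrow> 'w \<Rightarrow> 'm1) \<Rightarrow> (nat \<Rightarrow> 'w \<Rightarrow> bool)
   \<Rightarrow> (nat \<Rightarrow> 'w \<Rightarrow> real ^ 'k0) \<Rightarrow> nat \<Rightarrow> 'w measure" where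
  "common_info M Xg Mg Xl Ml G Ug t = sigma (space M)
     ((\<Union>s\<in>{..t}. gen_sets M (Xg s) borel)
      \<union> (\<Union>s\<in>{..t}. gen_sets M (Mg s) (count_space UNIV))
      \<union> (\<Union>s\<in>{..t}. gen_sets M (chan (G s) (Xl s)) (option_measure borel))
      \<union> (\<Union>s\<in>{..t}. gen_sets M (chan (G s) (Ml s)) (option_measure (count_space UNIV)))
      \<union> (\<Union>s\<in>{..<t}. gen_sets M (Ug s) borel))"

definition cond_indep ::
  "'w measure \<Rightarrow> 'w measure \<Rightarrow> ('w \<Rightarrow> 'b) \<Rightarrow> 'b measure \<Rightarrow> ('w \<Rightarrow> 'c) \<Rightarrow> 'c measure \<Rightarrow> bool" where
  "cond_indep M F Y N1 V N2 \<longleftrightarrow>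
     (\<forall>A\<in>sets N1. \<forall>B\<in>sets N2.
        AE \<omega> in M. real_cond_exp M F (indicator ({w\<in>space M. Y w \<in> A \<and> V w \<in> B})) \<omega>
          = real_cond_exp M F (indicator ({w\<in>space M. Y w \<in> A})) \<omega>
            * real_cond_exp M F (indicator ({w\<in>space M. V w \<in> B})) \<omega>)"

datatype prim_label = LX0g | LX0l | LW0 nat | LW1 nat | LM0 nat | LM1 nat | LGam nat

definition prim_events ::
  "'w measure \<Rightarrow> ('w \<Rightarrow> real ^ 'n0) \<Rightarrow> ('w \<Rightarrow> real ^ 'n1)
   \<Rightarrow> (nat \<Rightarrow> 'w \<Rightarrow> real ^ 'n0) \<Rightarrow> (nat \<Rightarrow> 'w \<Rightarrow> real ^ 'n1)
   \<Rightarrow> (nat \<Rightarrow> 'w \<Rightarrow> 'm0) \<Rightarrow> (nat \<Rightarrow> 'w \<Rightarrow> 'm1) \<Rightarrow> (nat \<Rightarrow> 'w \<Rightarrow> bool)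
   \<Rightarrow> prim_label \<Rightarrow> 'w set set" where
  "prim_events M X0g X0l W0 W1 Mg Ml G l = (case l of
      LX0g \<Rightarrow> gen_sets M X0g borel
    | LX0l \<Rightarrow> gen_sets M X0l borel
    | LW0 t \<Rightarrow> gen_sets M (W0 t) borel
    | LW1 t \<Rightarrow> gen_sets M (W1 t) borel
    | LM0 t \<Rightarrow> gen_sets M (Mg t) (count_space UNIV)
    | LM1 t \<Rightarrow> gen_sets M (Ml t) (count_space UNIV)
    | LGam t \<Rightarrow> gen_sets M (G t) (count_space UNIV))"

end

theory Submission
  imports Defs
begin


lemma vec_meas:
  fixes f :: "'a \<Rightarrow> real ^ 'n"
  assumes "\<And>i. (\<lambda>x. f x $ i) \<in> borel_measurable N"
  shows "f \<in> borel_measurable N"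
proof (rule borel_measurable_euclidean_space[THEN iffD2], intro ballI)
  fix b :: "real^'n" assume "b \<in> Basis"
  then obtain i u where u: "u \<in> (Basis :: real set)" and b: "b = axis i u"
    unfolding Basis_vec_def by blast
  have "u = 1" using u by simp
  have e: "f x \<bullet> b = f x $ i" for x
    unfolding b \<open>u = 1\<close> inner_axis by simp
  show "(\<lambda>x. f x \<bullet> b) \<in> borel_measurable N"
    unfolding e by (rule assms)
qed

lemma gen_sets_sub:
  assumes "f \<in> measurable K N" "space K = space M"
  shows "gen_sets M f N \<subseteq> sets K"
  using assms unfolding gen_sets_def by (auto dest: measurable_sets)

lemma sigma_sub:
  assumes "G \<subseteq> sets K" "space K = \<Omega>"
  shows "sets (sigma \<Omega> G) \<subseteq> sets K"
proof -
  have "G \<subseteq> Pow \<Omega>" using assms sets.sets_into_space by blast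
  then have "sets (sigma \<Omega> G) = sigma_sets \<Omega> G" by simp
  also have "\<dots> \<subseteq> sets K" using sets.sigma_sets_subset[of G K] assms by simp
  finally show ?thesis .
qed

lemma meas_trans:
  assumes "f \<in> measurable K N" "sets K \<subseteq> sets K'" "space K = space K'"
  shows "f \<in> measurable K' N"
  using measurable_mono[of N N K K'] assms by auto

lemma meas_of_gen:
  assumes "gen_sets M f N \<subseteq> sets K" "space K = space M" "f \<in> space M \<rightarrow> space N"
  shows "f \<in> measurable K N"
  using assms unfolding gen_sets_def measurable_def by auto

lemma chan_meas:
  assumes G: "G \<in> measurable K (count_space UNIV)" and Y: "Y \<in> measurable K N"
  shows "chan G Y \<in> measurable K (option_measure N)"
  unfolding option_measure_def
proof (rule measurable_measure_of)
  have GT: "G -` {True} \<inter> space K \<in> sets K" using measurable_sets[OF G, of "{True}"] by simp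
  fix y assume "y \<in> insert {None} ((\<lambda>B. Some ` B) ` sets N)"
  then consider "y = {None}" | B where "B \<in> sets N" "y = Some ` B" by blast
  then show "chan G Y -` y \<inter> space K \<in> sets K"
  proof cases
    case 1
    have "chan G Y -` y \<inter> space K = space K - (G -` {True} \<inter> space K)"
      unfolding 1 chan_def by (rule set_eqI) simp
    then show ?thesis using GT by (simp add: sets.Diff)
  next
    case 2
    have YB: "Y -` B \<inter> space K \<in> sets K" using measurable_sets[OF Y 2(1)] .
    have "chan G Y -` y \<inter> space K = (G -` {True} \<inter> space K) \<inter> (Y -` B \<inter> space K)"
      unfolding 2 chan_def by (rule set_eqI) (auto simp add: inj_image_mem_iff)
    then show ?thesis using GT YB by (simp add: sets.Int)
  qed
next
  show "chan G Y \<in> space K \<rightarrow> UNIV" by simp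
  show "insert {None} ((\<lambda>B. Some ` B) ` sets N) \<subseteq> Pow UNIV" by simp
qed

lemma gen_Int_stable: "Int_stable (gen_sets M f N)"
  unfolding Int_stable_def
proof (intro ballI)
  fix a b assume "a \<in> gen_sets M f N" "b \<in> gen_sets M f N"
  then obtain A B where A: "A \<in> sets N" "a = f -` A \<inter> space M" and B: "B \<in> sets N" "b = f -` B \<inter> space M"
    unfolding gen_sets_def by blast
  have "a \<inter> b = f -` (A \<inter> B) \<inter> space M" using A B by blast
  moreover have "A \<inter> B \<in> sets N" using A B by blast
  ultimately show "a \<inter> b \<in> gen_sets M f N" unfolding gen_sets_def by blast
qed

lemma pair_fun_meas:
  fixes a :: "'w \<Rightarrow> 'a::finite" and b :: "'w \<Rightarrow> 'b::finite"
  assumes a: "a \<in> measurable K (count_space UNIV)" and b: "b \<in> measurable K (count_space UNIV)"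
    and g: "\<And>x y. g x y \<in> space N"
  shows "(\<lambda>\<omega>. g (a \<omega>) (b \<omega>)) \<in> measurable K N"
proof -
  have ab: "(\<lambda>\<omega>. (a \<omega>, b \<omega>)) \<in> measurable K (count_space UNIV)"
  proof (subst measurable_count_space_eq2_countable, safe)
    fix x y
    have "(\<lambda>\<omega>. (a \<omega>, b \<omega>)) -` {(x, y)} \<inter> space K = (a -` {x} \<inter> space K) \<inter> (b -` {y} \<inter> space K)"
      by auto
    then show "(\<lambda>\<omega>. (a \<omega>, b \<omega>)) -` {(x, y)} \<inter> space K \<in> sets K"
      using measurable_sets[OF a, of "{x}"] measurable_sets[OF b, of "{y}"] by auto
  qed auto
  have "case_prod g \<in> measurable (count_space UNIV) N"
    using g by (auto simp: measurable_count_space_eq1)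
  from measurable_compose[OF ab this] show ?thesis by simp
qed

lemma nth_meas:
  fixes f :: "'w \<Rightarrow> real ^ 'n"
  assumes "f \<in> borel_measurable K"
  shows "(\<lambda>\<omega>. f \<omega> $ j) \<in> borel_measurable K"
  using measurable_compose[OF assms borel_measurable_nth[of j]] by simp

lemma stack_nth_meas:
  fixes x0 :: "'w \<Rightarrow> real ^ 'n0" and x1 :: "'w \<Rightarrow> real ^ 'n1"
  assumes "x0 \<in> borel_measurable K" "x1 \<in> borel_measurable K"
  shows "(\<lambda>\<omega>. stack (x0 \<omega>) (x1 \<omega>) $ j) \<in> borel_measurable K"
  using assms by (cases j) (auto simp: stack_def intro: nth_meas)

lemma mv_meas:
  fixes a :: "'w \<Rightarrow> 'a::finite" and b :: "'w \<Rightarrow> 'b::finite"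
    and A :: "'a \<Rightarrow> 'b \<Rightarrow> real ^ 'n ^ 'm"
  assumes a: "a \<in> measurable K (count_space UNIV)" and b: "b \<in> measurable K (count_space UNIV)"
    and x: "x \<in> borel_measurable K"
  shows "(\<lambda>\<omega>. A (a \<omega>) (b \<omega>) *v x \<omega>) \<in> borel_measurable K"
proof (rule vec_meas)
  fix i
  have [measurable]: "\<And>j. (\<lambda>\<omega>. A (a \<omega>) (b \<omega>) $ i $ j) \<in> borel_measurable K"
    by (rule pair_fun_meas[OF a b]) simp
  have [measurable]: "\<And>j. (\<lambda>\<omega>. x \<omega> $ j) \<in> borel_measurable K"
    using x by (rule nth_meas)
  show "(\<lambda>\<omega>. (A (a \<omega>) (b \<omega>) *v x \<omega>) $ i) \<in> borel_measurable K"
    unfolding matrix_vector_mult_def by simp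
qed

lemma stack_meas:
  fixes x0 :: "'w \<Rightarrow> real ^ 'n0" and x1 :: "'w \<Rightarrow> real ^ 'n1"
  assumes "x0 \<in> borel_measurable K" "x1 \<in> borel_measurable K"
  shows "(\<lambda>\<omega>. stack (x0 \<omega>) (x1 \<omega>)) \<in> borel_measurable K"
  by (rule vec_meas) (rule stack_nth_meas[OF assms])

lemma dyn_meas:
  fixes mg :: "'w \<Rightarrow> 'a::finite" and ml :: "'w \<Rightarrow> 'b::finite"
    and xg xg' wg :: "'w \<Rightarrow> real ^ 'n0::finite" and xl xl' wl :: "'w \<Rightarrow> real ^ 'n1::finite"
    and ug :: "'w \<Rightarrow> real ^ 'k0::finite" and ul :: "'w \<Rightarrow> real ^ 'k1::finite"
  assumes mg: "mg \<in> measurable K (count_space UNIV)" and ml: "ml \<in> measurable K (count_space UNIV)"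
    and m: "xg \<in> borel_measurable K" "xl \<in> borel_measurable K" "ug \<in> borel_measurable K"
      "ul \<in> borel_measurable K" "wg \<in> borel_measurable K" "wl \<in> borel_measurable K"
    and eq: "\<And>\<omega>. \<omega> \<in> space K \<Longrightarrow> stack (xg' \<omega>) (xl' \<omega>) =
        A (mg \<omega>) (ml \<omega>) *v stack (xg \<omega>) (xl \<omega>) + B (mg \<omega>) (ml \<omega>) *v stack (ug \<omega>) (ul \<omega>)
        + stack (wg \<omega>) (wl \<omega>)"
  shows "xg' \<in> borel_measurable K" "xl' \<in> borel_measurable K"
proof -
  define R where "R = (\<lambda>\<omega>. A (mg \<omega>) (ml \<omega>) *v stack (xg \<omega>) (xl \<omega>) + B (mg \<omega>) (ml \<omega>) *v stack (ug \<omega>) (ul \<omega>)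
        + stack (wg \<omega>) (wl \<omega>))"
  have m1: "(\<lambda>\<omega>. A (mg \<omega>) (ml \<omega>) *v stack (xg \<omega>) (xl \<omega>)) \<in> borel_measurable K"
    by (rule mv_meas[OF mg ml stack_meas[OF m(1) m(2)]])
  have m2: "(\<lambda>\<omega>. B (mg \<omega>) (ml \<omega>) *v stack (ug \<omega>) (ul \<omega>)) \<in> borel_measurable K"
    by (rule mv_meas[OF mg ml stack_meas[OF m(3) m(4)]])
  have m3: "(\<lambda>\<omega>. stack (wg \<omega>) (wl \<omega>)) \<in> borel_measurable K"
    by (rule stack_meas[OF m(5) m(6)])
  have R: "R \<in> borel_measurable K"
    unfolding R_def by (rule borel_measurable_add[OF borel_measurable_add[OF m1 m2] m3])
  have Rn: "(\<lambda>\<omega>. R \<omega> $ j) \<in> borel_measurable K" for j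
    using R by (rule nth_meas)
  show "xg' \<in> borel_measurable K"
  proof (rule vec_meas)
    fix i
    have e: "R w $ Inl i = xg' w $ i" if w: "w \<in> space K" for w
    proof -
      have "xg' w $ i = stack (xg' w) (xl' w) $ Inl i" by (simp add: stack_def)
      also have "\<dots> = R w $ Inl i" by (simp only: eq[OF w] R_def)
      finally show ?thesis by (rule sym)
    qed
    show "(\<lambda>\<omega>. xg' \<omega> $ i) \<in> borel_measurable K"
      using Rn[of "Inl i"] by (rule measurable_cong[THEN iffD1, rotated]) (rule e)
  qed
  show "xl' \<in> borel_measurable K"
  proof (rule vec_meas)
    fix i
    have e: "R w $ Inr i = xl' w $ i" if w: "w \<in> space K" for w
    proof -
      have "xl' w $ i = stack (xg' w) (xl' w) $ Inr i" by (simp add: stack_def)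
      also have "\<dots> = R w $ Inr i" by (simp only: eq[OF w] R_def)
      finally show ?thesis by (rule sym)
    qed
    show "(\<lambda>\<omega>. xl' \<omega> $ i) \<in> borel_measurable K"
      using Rn[of "Inr i"] by (rule measurable_cong[THEN iffD1, rotated]) (rule e)
  qed
qed

lemma set_int_ind:
  assumes "C \<in> sets M" "E \<in> sets M"
  shows "(\<integral>x\<in>C. (indicator E x :: real) \<partial>M) = measure M (C \<inter> E)"
proof -
  have "(\<lambda>x. indicator C x *\<^sub>R (indicator E x :: real)) = indicator (C \<inter> E)"
    by (rule ext) (simp add: indicator_def)
  moreover have "C \<inter> E \<inter> space M = C \<inter> E" using assms sets.sets_into_space by blast
  ultimately show ?thesis unfolding set_lebesgue_integral_def by simp
qed

lemma sigma_gen: "G \<subseteq> Pow \<Omega> \<Longrightarrow> x \<in> G \<Longrightarrow> x \<in> sets (sigma \<Omega> G)"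
  by simp



theorem lemma3:
  fixes M :: "'w measure"
    and T :: nat
    and A :: "'m0::finite \<Rightarrow> 'm1::finite \<Rightarrow> real ^ ('n0::finite + 'n1::finite) ^ ('n0 + 'n1)"
    and B :: "'m0 \<Rightarrow> 'm1 \<Rightarrow> real ^ ('k0::finite + 'k1::finite) ^ ('n0 + 'n1)"
    and Xg :: "nat \<Rightarrow> 'w \<Rightarrow> real ^ 'n0" and Xl :: "nat \<Rightarrow> 'w \<Rightarrow> real ^ 'n1"
    and Mg :: "nat \<Rightarrow> 'w \<Rightarrow> 'm0" and Ml :: "nat \<Rightarrow> 'w \<Rightarrow> 'm1"
    and Wg :: "nat \<Rightarrow> 'w \<Rightarrow> real ^ 'n0" and Wl :: "nat \<Rightarrow> 'w \<Rightarrow> real ^ 'n1"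
    and Gam :: "nat \<Rightarrow> 'w \<Rightarrow> bool"
    and Ug :: "nat \<Rightarrow> 'w \<Rightarrow> real ^ 'k0" and Ul :: "nat \<Rightarrow> 'w \<Rightarrow> real ^ 'k1"
    and rho :: "nat \<Rightarrow> 'w \<times> (real ^ 'n1) \<times> 'm1 \<Rightarrow> real ^ 'k1"
  assumes P: "prob_space M"
    \<comment> \<open>primitive random variables and their measurability\<close>
    and meas_X0g: "Xg 0 \<in> borel_measurable M" and meas_X0l: "Xl 0 \<in> borel_measurable M"
    and meas_W: "\<And>t. Wg t \<in> borel_measurable M" "\<And>t. Wl t \<in> borel_measurable M"
    and meas_M: "\<And>t. Mg t \<in> measurable M (count_space UNIV)"
                "\<And>t. Ml t \<in> measurable M (count_space UNIV)"
    and meas_G: "\<And>t. Gam t \<in> measurable M (count_space UNIV)"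
    \<comment> \<open>mutual independence of X_0^n, W_t^n, M_t^n, Gamma_t\<close>
    and indep: "prob_space.indep_sets M (prim_events M (Xg 0) (Xl 0) Wg Wl Mg Ml Gam) UNIV"
    \<comment> \<open>Gamma_t identically (Bernoulli) distributed\<close>
    and ident: "\<exists>p. \<forall>t. measure M {\<omega>\<in>space M. Gam t \<omega>} = p"
    \<comment> \<open>switched linear dynamics, t = 0..T\<close>
    and dyn: "\<And>t \<omega>. t \<le> T \<Longrightarrow> \<omega> \<in> space M \<Longrightarrow>
       stack (Xg (Suc t) \<omega>) (Xl (Suc t) \<omega>) =
         A (Mg t \<omega>) (Ml t \<omega>) *v stack (Xg t \<omega>) (Xl t \<omega>)
         + B (Mg t \<omega>) (Ml t \<omega>) *v stack (Ug t \<omega>) (Ul t \<omega>)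
         + stack (Wg t \<omega>) (Wl t \<omega>)"
    \<comment> \<open>states and actions are random variables\<close>
    and meas_X: "\<And>t. Xg t \<in> borel_measurable M" "\<And>t. Xl t \<in> borel_measurable M"
    and meas_U: "\<And>t. Ug t \<in> borel_measurable M" "\<And>t. Ul t \<in> borel_measurable M"
    \<comment> \<open>prescription strategy: U_t^0 is a function of H_t^0\<close>
    and strat_g: "\<And>t. t \<le> T \<Longrightarrow> Ug t \<in> borel_measurable (common_info M Xg Mg Xl Ml Gam Ug t)"
    \<comment> \<open>prescription rho_t chosen as a function of H_t^0, U_t^1 = rho_t(X_t^1, M_t^1)\<close>
    and strat_l: "\<And>t. t \<le> T \<Longrightarrow> rho t \<in> borel_measurable
        (common_info M Xg Mg Xl Ml Gam Ug t \<Otimes>\<^sub>M (borel \<Otimes>\<^sub>M count_space UNIV))"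
    and strat_l_eq: "\<And>t \<omega>. t \<le> T \<Longrightarrow> \<omega> \<in> space M \<Longrightarrow> Ul t \<omega> = rho t (\<omega>, Xl t \<omega>, Ml t \<omega>)"
    \<comment> \<open>finite second moments of all states and actions\<close>
    and mom_X: "\<And>t. t \<le> Suc T \<Longrightarrow> integrable M (\<lambda>\<omega>. (norm (Xg t \<omega>))\<^sup>2)"
               "\<And>t. t \<le> Suc T \<Longrightarrow> integrable M (\<lambda>\<omega>. (norm (Xl t \<omega>))\<^sup>2)"
    and mom_U: "\<And>t. t \<le> T \<Longrightarrow> integrable M (\<lambda>\<omega>. (norm (Ug t \<omega>))\<^sup>2)"
               "\<And>t. t \<le> T \<Longrightarrow> integrable M (\<lambda>\<omega>. (norm (Ul t \<omega>))\<^sup>2)"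
    and t_le: "t \<le> T"
  shows "cond_indep M (common_info M Xg Mg Xl Ml Gam Ug t) (Xl t) borel (Ml t) (count_space UNIV)"
proof -
  interpret prob_space M by (rule P)
  define E where "E = prim_events M (Xg 0) (Xl 0) Wg Wl Mg Ml Gam"
  define S where "S L = sigma (space M) (\<Union>l\<in>L. E l)" for L
  define Lab where "Lab s = {LX0g, LX0l} \<union> (\<Union>r\<in>{..<s}. {LW0 r, LW1 r, LM0 r, LM1 r, LGam r})" for s
  define CI where "CI s = common_info M Xg Mg Xl Ml Gam Ug s" for s
  have E_sets: "E l \<subseteq> sets M" for l
    unfolding E_def prim_events_def
    using gen_sets_sub[OF meas_X0g refl] gen_sets_sub[OF meas_X0l refl] gen_sets_sub[OF meas_W(1) refl]
      gen_sets_sub[OF meas_W(2) refl] gen_sets_sub[OF meas_M(1) refl] gen_sets_sub[OF meas_M(2) refl]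
      gen_sets_sub[OF meas_G refl]
    by (cases l) auto
  have E_pow: "(\<Union>l\<in>L. E l) \<subseteq> Pow (space M)" for L
    using E_sets sets.sets_into_space by blast
  have S_space: "space (S L) = space M" for L
    unfolding S_def using E_pow by simp
  have S_sets: "sets (S L) = sigma_sets (space M) (\<Union>l\<in>L. E l)" for L
    unfolding S_def using E_pow by simp
  have S_mono: "L \<subseteq> L' \<Longrightarrow> sets (S L) \<subseteq> sets (S L')" for L L'
    unfolding S_sets by (rule sigma_sets_subseteq) auto
  have S_M: "sets (S L) \<subseteq> sets M" for L
    unfolding S_def by (rule sigma_sub) (use E_sets in auto)
  have S_in: "l \<in> L \<Longrightarrow> E l \<subseteq> sets (S L)" for l L
    unfolding S_sets by auto
  have S_tr: "f \<in> measurable (S L) N \<Longrightarrow> L \<subseteq> L' \<Longrightarrow> f \<in> measurable (S L') N" for f L L' and N :: "'zz measure"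
    by (rule meas_trans[OF _ S_mono]) (simp_all only: S_space)
  have prim: "f \<in> measurable (S L) N"
    if "l \<in> L" "E l = gen_sets M f N" "space N = UNIV" for l L f and N :: "'zz measure"
  proof (rule meas_of_gen[OF _ S_space])
    show "gen_sets M f N \<subseteq> sets (S L)" using S_in[OF that(1)] that(2) by simp
    show "f \<in> space M \<rightarrow> space N" using that(3) by simp
  qed
  have pX0g: "Xg 0 \<in> borel_measurable (S L)" if "LX0g \<in> L" for L r
    by (rule prim[OF that]) (simp_all add: E_def prim_events_def)
  have pX0l: "Xl 0 \<in> borel_measurable (S L)" if "LX0l \<in> L" for L r
    by (rule prim[OF that]) (simp_all add: E_def prim_events_def)
  have pWg: "Wg r \<in> borel_measurable (S L)" if "LW0 r \<in> L" for L r
    by (rule prim[OF that]) (simp_all add: E_def prim_events_def)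
  have pWl: "Wl r \<in> borel_measurable (S L)" if "LW1 r \<in> L" for L r
    by (rule prim[OF that]) (simp_all add: E_def prim_events_def)
  have pMg: "Mg r \<in> measurable (S L) (count_space UNIV)" if "LM0 r \<in> L" for L r
    by (rule prim[OF that]) (simp_all add: E_def prim_events_def)
  have pMl: "Ml r \<in> measurable (S L) (count_space UNIV)" if "LM1 r \<in> L" for L r
    by (rule prim[OF that]) (simp_all add: E_def prim_events_def)
  have pG: "Gam r \<in> measurable (S L) (count_space UNIV)" if "LGam r \<in> L" for L r
    by (rule prim[OF that]) (simp_all add: E_def prim_events_def)
  have CI_space: "space (CI s) = space M" for s
  proof -
    have "space (CI s) = space M"
      unfolding CI_def common_info_def
      by (rule space_measure_of) (auto simp: gen_sets_def)
    then show ?thesis .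
  qed
  have CI_sub: "sets (CI s) \<subseteq> sets K"
    if Ks: "space K = space M"
      and h1: "\<And>r. r \<le> s \<Longrightarrow> Xg r \<in> borel_measurable K \<and> Xl r \<in> borel_measurable K
                \<and> Mg r \<in> measurable K (count_space UNIV) \<and> Gam r \<in> measurable K (count_space UNIV)"
      and h2: "\<And>r. r < s \<Longrightarrow> Ml r \<in> measurable K (count_space UNIV) \<and> Ug r \<in> borel_measurable K"
      and h3: "chan (Gam s) (Ml s) \<in> measurable K (option_measure (count_space UNIV))"
    for s K
    unfolding CI_def common_info_def
  proof (rule sigma_sub[OF _ Ks])
    have a: "gen_sets M (Xg r) borel \<subseteq> sets K" "gen_sets M (Mg r) (count_space UNIV) \<subseteq> sets K"
       "gen_sets M (chan (Gam r) (Xl r)) (option_measure borel) \<subseteq> sets K"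
       if "r \<le> s" for r
      using h1[OF that] by (auto intro!: gen_sets_sub[OF _ Ks] chan_meas)
    have b: "gen_sets M (chan (Gam r) (Ml r)) (option_measure (count_space UNIV)) \<subseteq> sets K"
      if "r \<le> s" for r
    proof (cases "r = s")
      case True then show ?thesis using h3 by (auto intro!: gen_sets_sub[OF _ Ks])
    next
      case False then show ?thesis using h1[OF that] h2[of r] that
        by (auto intro!: gen_sets_sub[OF _ Ks] chan_meas)
    qed
    have c: "gen_sets M (Ug r) borel \<subseteq> sets K" if "r < s" for r
      using h2[OF that] by (auto intro!: gen_sets_sub[OF _ Ks])
    show "(\<Union>r\<in>{..s}. gen_sets M (Xg r) borel) \<union> (\<Union>r\<in>{..s}. gen_sets M (Mg r) (count_space UNIV))
     \<union> (\<Union>r\<in>{..s}. gen_sets M (chan (Gam r) (Xl r)) (option_measure borel))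
     \<union> (\<Union>r\<in>{..s}. gen_sets M (chan (Gam r) (Ml r)) (option_measure (count_space UNIV)))
     \<union> (\<Union>r\<in>{..<s}. gen_sets M (Ug r) borel) \<subseteq> sets K"
      by (intro Un_least UN_least) (simp_all add: a b c)
  qed
  have Lab_mono: "r \<le> s \<Longrightarrow> Lab r \<subseteq> Lab s" for r s
    unfolding Lab_def by auto
  have Lab_in: "r < s \<Longrightarrow> LW0 r \<in> Lab s \<and> LW1 r \<in> Lab s \<and> LM0 r \<in> Lab s \<and> LM1 r \<in> Lab s \<and> LGam r \<in> Lab s" for r s
    unfolding Lab_def by auto
  have Lab_0: "LX0g \<in> Lab s" "LX0l \<in> Lab s" for s
    unfolding Lab_def by auto
  have Q: "(\<forall>r\<le>s. Xg r \<in> borel_measurable (S (Lab s)) \<and> Xl r \<in> borel_measurable (S (Lab s)))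
         \<and> (\<forall>r<s. Ug r \<in> borel_measurable (S (Lab s)))" if "s \<le> t" for s
    using that
  proof (induction s)
    case 0
    then show ?case using pX0g[OF Lab_0(1)] pX0l[OF Lab_0(2)] by auto
  next
    case (Suc s)
    let ?K = "S (Lab (Suc s))"
    have sT: "s \<le> T" using Suc.prems t_le by simp
    have IH0: "(\<forall>r\<le>s. Xg r \<in> borel_measurable (S (Lab s)) \<and> Xl r \<in> borel_measurable (S (Lab s)))
         \<and> (\<forall>r<s. Ug r \<in> borel_measurable (S (Lab s)))"
      using Suc.IH Suc.prems by simp
    have tr: "f \<in> measurable ?K N" if "f \<in> measurable (S (Lab s)) N" for f and N :: "'zz measure"
      by (rule S_tr[OF that Lab_mono]) simp
    have IH1: "Xg r \<in> borel_measurable ?K \<and> Xl r \<in> borel_measurable ?K" if "r \<le> s" for r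
    proof -
      have "Xg r \<in> borel_measurable (S (Lab s))" "Xl r \<in> borel_measurable (S (Lab s))"
        using IH0 that by simp_all
      then show ?thesis by (simp add: tr)
    qed
    have IH2: "Ug r \<in> borel_measurable ?K" if "r < s" for r
    proof -
      have "Ug r \<in> borel_measurable (S (Lab s))"
        using IH0 that by simp_all
      then show ?thesis by (simp add: tr)
    qed
    have IH: "\<forall>r\<le>s. Xg r \<in> borel_measurable ?K \<and> Xl r \<in> borel_measurable ?K"
             "\<forall>r<s. Ug r \<in> borel_measurable ?K"
      using IH1 IH2 by blast+
    have ci: "sets (CI s) \<subseteq> sets ?K"
    proof (rule CI_sub[OF S_space])
      fix r assume "r \<le> s"
      then show "Xg r \<in> borel_measurable ?K \<and> Xl r \<in> borel_measurable ?K
                \<and> Mg r \<in> measurable ?K (count_space UNIV) \<and> Gam r \<in> measurable ?K (count_space UNIV)"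
        using IH(1) pMg pG Lab_in[of r "Suc s"] by auto
    next
      fix r assume "r < s"
      then show "Ml r \<in> measurable ?K (count_space UNIV) \<and> Ug r \<in> borel_measurable ?K"
        using IH(2) pMl Lab_in[of r "Suc s"] by auto
    next
      show "chan (Gam s) (Ml s) \<in> measurable ?K (option_measure (count_space UNIV))"
        using Lab_in[of s "Suc s"] by (auto intro!: chan_meas pG pMl)
    qed
    have ug: "Ug s \<in> borel_measurable ?K"
      using meas_trans[OF strat_g[OF sT, folded CI_def] ci] CI_space S_space by simp
    have ul: "Ul s \<in> borel_measurable ?K"
    proof -
      have idm: "(\<lambda>\<omega>. \<omega>) \<in> measurable ?K (CI s)"
        using ci CI_space S_space unfolding measurable_def by auto
      have mlK: "Ml s \<in> measurable ?K (count_space UNIV)" using Lab_in[of s "Suc s"] pMl by auto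
      have xlK: "Xl s \<in> borel_measurable ?K" using IH(1) by auto
      have pr: "(\<lambda>\<omega>. (\<omega>, Xl s \<omega>, Ml s \<omega>)) \<in> measurable ?K (CI s \<Otimes>\<^sub>M (borel \<Otimes>\<^sub>M count_space UNIV))"
        using idm xlK mlK by (intro measurable_Pair) auto
      have "(\<lambda>\<omega>. rho s (\<omega>, Xl s \<omega>, Ml s \<omega>)) \<in> borel_measurable ?K"
        using measurable_compose[OF pr strat_l[OF sT, folded CI_def]] by simp
      then show ?thesis
        by (rule measurable_cong[THEN iffD1, rotated]) (simp add: S_space strat_l_eq[OF sT])
    qed
    have mg: "Mg s \<in> measurable ?K (count_space UNIV)" and ml: "Ml s \<in> measurable ?K (count_space UNIV)"
      using Lab_in[of s "Suc s"] pMl pMg by auto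
    have wg: "Wg s \<in> borel_measurable ?K" and wl: "Wl s \<in> borel_measurable ?K"
      using Lab_in[of s "Suc s"] pWl pWg by auto
    have xs: "Xg s \<in> borel_measurable ?K" "Xl s \<in> borel_measurable ?K" using IH(1) by auto
    have nx: "Xg (Suc s) \<in> borel_measurable ?K" "Xl (Suc s) \<in> borel_measurable ?K"
      using dyn_meas[OF mg ml xs ug ul wg wl, of "Xg (Suc s)" "Xl (Suc s)" A B] dyn[OF sT] S_space
      by auto
    show ?case
      using IH nx ug by (auto simp: le_Suc_eq less_Suc_eq)
  qed
  define Lg where "Lg = Lab t \<union> {LM0 t, LGam t}"
  define G where "G = S Lg"
  have Qt: "\<forall>r\<le>t. Xg r \<in> borel_measurable (S (Lab t)) \<and> Xl r \<in> borel_measurable (S (Lab t))"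
           "\<forall>r<t. Ug r \<in> borel_measurable (S (Lab t))"
    using Q[OF order_refl] by simp_all
  have trG: "f \<in> measurable G N" if "f \<in> measurable (S (Lab t)) N" for f and N :: "'zz measure"
    unfolding G_def by (rule S_tr[OF that]) (unfold Lg_def, blast)
  have G_space: "space G = space M" unfolding G_def by (rule S_space)
  have gamG: "Gam t \<in> measurable G (count_space UNIV)"
    unfolding G_def by (rule pG) (simp add: Lg_def)
  have LM1: "LM1 t \<notin> Lg" unfolding Lg_def Lab_def by auto
  define N where "N = {\<omega>\<in>space M. \<not> Gam t \<omega>}"
  have N_eq: "N = Gam t -` {False} \<inter> space G" unfolding N_def G_space by auto
  have NG: "N \<in> sets G" unfolding N_eq by (rule measurable_sets[OF gamG]) simp
  have spG: "space M \<in> sets G" using sets.top[of G] G_space by simp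
  define D where "D = {C. C \<subseteq> space M \<and> (\<exists>C'\<in>sets G. C \<inter> N = C' \<inter> N)}"
  have D_pow: "D \<subseteq> Pow (space M)" unfolding D_def by auto
  have D_closed: "sigma_sets (space M) D \<subseteq> D"
  proof
    fix C assume "C \<in> sigma_sets (space M) D"
    then show "C \<in> D"
    proof induction
      case (Basic a) then show ?case .
    next
      case Empty
      show ?case unfolding D_def using sets.empty_sets[of G] by blast
    next
      case (Compl a)
      then obtain C' where C': "C' \<in> sets G" "a \<inter> N = C' \<inter> N" unfolding D_def by blast
      have "(space M - a) \<inter> N = (space M - C') \<inter> N"
        using C'(2) N_def by blast
      moreover have "space M - C' \<in> sets G" using C'(1) G_space sets.compl_sets[of C' G] by simp
      ultimately show ?case unfolding D_def by blast
    next
      case (Union a)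
      have "\<exists>C'. C' \<in> sets G \<and> a i \<inter> N = C' \<inter> N" for i
        using Union.IH[of i] unfolding D_def by blast
      then obtain C' where C': "\<And>i. C' i \<in> sets G" "\<And>i. a i \<inter> N = C' i \<inter> N" by metis
      have "(\<Union>i. a i) \<inter> N = (\<Union>i. C' i) \<inter> N" using C'(2) by blast
      moreover have "(\<Union>i. C' i) \<in> sets G" using C'(1) by blast
      moreover have "(\<Union>i. a i) \<subseteq> space M" using Union.IH unfolding D_def by blast
      ultimately show ?case unfolding D_def by blast
    qed
  qed
  define K where "K = sigma (space M) D"
  have K_space: "space K = space M" unfolding K_def using D_pow by simp
  have K_sets: "sets K = D" unfolding K_def using D_pow D_closed sigma_sets_superset_generator[of D "space M"] by auto
  have GK: "sets G \<subseteq> sets K"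
  proof
    fix C assume C: "C \<in> sets G"
    then have "C \<subseteq> space M" using sets.sets_into_space[of C G] G_space by simp
    with C show "C \<in> sets K" unfolding K_sets D_def by blast
  qed
  have trK: "f \<in> measurable K N'" if "f \<in> measurable G N'" for f and N' :: "'zz measure"
    by (rule meas_trans[OF that GK]) (simp add: G_space K_space)
  have chanK: "chan (Gam t) (Ml t) \<in> measurable K (option_measure (count_space UNIV))"
    unfolding option_measure_def
  proof (rule measurable_measure_of)
    fix y :: "'m1 option set"
    define C' where "C' = (if None \<in> y then space M else {})"
    have "C' \<in> sets G" unfolding C'_def using spG sets.empty_sets[of G] by simp
    moreover have "(chan (Gam t) (Ml t) -` y \<inter> space K) \<inter> N = C' \<inter> N"
      unfolding C'_def N_def K_space chan_def by auto
    moreover have "chan (Gam t) (Ml t) -` y \<inter> space K \<subseteq> space M" using K_space by simp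
    ultimately show "chan (Gam t) (Ml t) -` y \<inter> space K \<in> sets K"
      unfolding K_sets D_def by blast
  qed auto
  have CI_K: "sets (CI t) \<subseteq> sets K"
  proof (rule CI_sub[OF K_space])
    fix r assume r: "r \<le> t"
    have a: "Xg r \<in> borel_measurable K" "Xl r \<in> borel_measurable K"
      using Qt(1) r by (auto intro!: trK trG)
    have "Mg r \<in> measurable G (count_space UNIV) \<and> Gam r \<in> measurable G (count_space UNIV)"
    proof (cases "r = t")
      case True then show ?thesis unfolding G_def by (auto intro!: pMg pG simp: Lg_def)
    next
      case False then have "r < t" using r by simp
      then show ?thesis unfolding G_def using Lab_in[of r t] by (auto intro!: pMg pG simp: Lg_def)
    qed
    then show "Xg r \<in> borel_measurable K \<and> Xl r \<in> borel_measurable K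
        \<and> Mg r \<in> measurable K (count_space UNIV) \<and> Gam r \<in> measurable K (count_space UNIV)"
      using a by (auto intro!: trK)
  next
    fix r assume r: "r < t"
    have "Ml r \<in> measurable G (count_space UNIV)"
      unfolding G_def using Lab_in[OF r] by (auto intro!: pMl simp: Lg_def)
    moreover have "Ug r \<in> borel_measurable G" using Qt(2) r by (auto intro!: trG)
    ultimately show "Ml r \<in> measurable K (count_space UNIV) \<and> Ug r \<in> borel_measurable K"
      by (auto intro!: trK)
  qed (rule chanK)
  have CI_D: "C \<in> D" if "C \<in> sets (CI t)" for C
    using CI_K that K_sets by auto
  have indE: "indep_sets E UNIV" using indep unfolding E_def .
  define I where "I = (\<lambda>b::bool. if b then Lg else {LM1 t})"
  have ind2: "indep_sets (\<lambda>j. sigma_sets (space M) (\<Union>i\<in>I j. E i)) UNIV"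
  proof (rule indep_sets_collect_sigma)
    show "indep_sets E (\<Union>j\<in>UNIV. I j)" by (rule indep_sets_mono_index[OF _ indE]) simp
    show "Int_stable (E i)" for i
      by (cases i) (simp_all add: E_def prim_events_def gen_Int_stable)
    show "disjoint_family_on I UNIV"
      unfolding disjoint_family_on_def I_def using LM1 by auto
  qed
  have iset: "indep_set (sigma_sets (space M) (\<Union>i\<in>Lg. E i)) (sigma_sets (space M) (E (LM1 t)))"
    unfolding indep_set_def
    by (rule indep_sets_cong[THEN iffD1, OF refl _ ind2]) (auto simp: I_def split: bool.split)
  have G_sets: "sets G = sigma_sets (space M) (\<Union>i\<in>Lg. E i)" unfolding G_def by (rule S_sets)
  have core: "prob (C \<inter> N \<inter> Y \<inter> MB) = prob MB * prob (C \<inter> N \<inter> Y)"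
    if C: "C \<in> sets (CI t)" and Y: "Y \<in> sets G" and MB: "MB \<in> sigma_sets (space M) (E (LM1 t))" for C Y MB
  proof -
    obtain C' where C': "C' \<in> sets G" "C \<inter> N = C' \<inter> N" using CI_D[OF C] unfolding D_def by blast
    have e1: "C \<inter> N \<inter> Y = C' \<inter> N \<inter> Y" using C'(2) by blast
    have inG: "C' \<inter> N \<inter> Y \<in> sigma_sets (space M) (\<Union>i\<in>Lg. E i)"
      using C'(1) NG Y G_sets by (metis sets.Int)
    have "prob (C' \<inter> N \<inter> Y \<inter> MB) = prob (C' \<inter> N \<inter> Y) * prob MB"
      by (rule indep_setD[OF iset inG MB])
    then show ?thesis using e1 by (simp add: mult.commute)
  qed
  have GM_sub: "sets G \<subseteq> sets M" unfolding G_def by (rule S_M)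
  have CI_M: "sets (CI t) \<subseteq> sets M"
  proof (rule CI_sub[OF refl])
    fix r assume "r \<le> t"
    show "Xg r \<in> borel_measurable M \<and> Xl r \<in> borel_measurable M
        \<and> Mg r \<in> measurable M (count_space UNIV) \<and> Gam r \<in> measurable M (count_space UNIV)"
      using meas_X meas_M meas_G by blast
  next
    fix r assume "r < t"
    show "Ml r \<in> measurable M (count_space UNIV) \<and> Ug r \<in> borel_measurable M"
      using meas_M meas_U by blast
  next
    show "chan (Gam t) (Ml t) \<in> measurable M (option_measure (count_space UNIV))"
      by (rule chan_meas[OF meas_G meas_M(2)])
  qed
  have subalg: "subalgebra M (CI t)" unfolding subalgebra_def using CI_M CI_space by simp
  interpret sf: sigma_finite_subalgebra M "CI t"
    using finite_measure_subalgebra_is_sigma_finite[of M "CI t"] subalg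
    by (simp add: finite_measure_subalgebra_def finite_measure_subalgebra_axioms_def finite_measure_axioms)
  have gens_pow: "(\<Union>r\<in>{..t}. gen_sets M (Xg r) borel) \<union> (\<Union>r\<in>{..t}. gen_sets M (Mg r) (count_space UNIV))
     \<union> (\<Union>r\<in>{..t}. gen_sets M (chan (Gam r) (Xl r)) (option_measure borel))
     \<union> (\<Union>r\<in>{..t}. gen_sets M (chan (Gam r) (Ml r)) (option_measure (count_space UNIV)))
     \<union> (\<Union>r\<in>{..<t}. gen_sets M (Ug r) borel) \<subseteq> Pow (space M)"
    unfolding gen_sets_def by blast
  have tt: "t \<in> {..t}" by simp
  have CIg1: "gen_sets M (chan (Gam t) (Xl t)) (option_measure borel) \<subseteq> sets (CI t)"
  proof
    fix x assume x: "x \<in> gen_sets M (chan (Gam t) (Xl t)) (option_measure borel)"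
    show "x \<in> sets (CI t)" unfolding CI_def common_info_def
      by (rule sigma_gen[OF gens_pow]) (use x tt in blast)
  qed
  have CIg2: "gen_sets M (chan (Gam t) (Ml t)) (option_measure (count_space UNIV)) \<subseteq> sets (CI t)"
  proof
    fix x assume x: "x \<in> gen_sets M (chan (Gam t) (Ml t)) (option_measure (count_space UNIV))"
    show "x \<in> sets (CI t)" unfolding CI_def common_info_def
      by (rule sigma_gen[OF gens_pow]) (use x tt in blast)
  qed
  have chF1: "chan (Gam t) (Xl t) \<in> measurable (CI t) (option_measure borel)"
    by (rule meas_of_gen[OF CIg1 CI_space]) (simp add: option_measure_def)
  have chF2: "chan (Gam t) (Ml t) \<in> measurable (CI t) (option_measure (count_space UNIV))"
    by (rule meas_of_gen[OF CIg2 CI_space]) (simp add: option_measure_def)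
  have NF: "N \<in> sets (CI t)"
  proof -
    have "{None} \<in> sets (option_measure (borel :: (real ^ 'n1) measure))"
      unfolding option_measure_def by (rule sigma_gen) auto
    from measurable_sets[OF chF1 this]
    have "chan (Gam t) (Xl t) -` {None} \<inter> space (CI t) \<in> sets (CI t)" .
    moreover have "chan (Gam t) (Xl t) -` {None} \<inter> space (CI t) = N"
      unfolding CI_space N_def chan_def by auto
    ultimately show ?thesis by simp
  qed
  have xlG: "Xl t \<in> borel_measurable G" using Qt(1) by (auto intro!: trG)
  show ?thesis
    unfolding cond_indep_def CI_def[symmetric]
  proof (intro ballI)
    fix A :: "(real ^ 'n1) set" and Bs :: "'m1 set"
    assume A: "A \<in> sets borel" and Bs: "Bs \<in> sets (count_space UNIV)"
    define XA where "XA = {w \<in> space M. Xl t w \<in> A}"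
    define MB where "MB = {w \<in> space M. Ml t w \<in> Bs}"
    define GM where "GM = {w \<in> space M. Gam t w \<and> Ml t w \<in> Bs}"
    define p where "p = prob MB"
    have XAG: "XA \<in> sets G"
    proof -
      have "Xl t -` A \<inter> space G \<in> sets G" by (rule measurable_sets[OF xlG A])
      moreover have "Xl t -` A \<inter> space G = XA" unfolding XA_def G_space by auto
      ultimately show ?thesis by simp
    qed
    have MBE: "MB \<in> sigma_sets (space M) (E (LM1 t))"
    proof (rule sigma_sets.Basic)
      have "Ml t -` Bs \<inter> space M \<in> gen_sets M (Ml t) (count_space UNIV)"
        unfolding gen_sets_def using Bs by blast
      moreover have "Ml t -` Bs \<inter> space M = MB" unfolding MB_def by auto
      ultimately show "MB \<in> E (LM1 t)" by (simp add: E_def prim_events_def)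
    qed
    have GMF: "GM \<in> sets (CI t)"
    proof -
      have "Some ` Bs \<in> sets (option_measure (count_space UNIV :: 'm1 measure))"
        unfolding option_measure_def by (rule sigma_gen) auto
      from measurable_sets[OF chF2 this]
      have "chan (Gam t) (Ml t) -` (Some ` Bs) \<inter> space (CI t) \<in> sets (CI t)" .
      moreover have "chan (Gam t) (Ml t) -` (Some ` Bs) \<inter> space (CI t) = GM"
        unfolding CI_space GM_def chan_def by (auto simp: inj_image_mem_iff split: if_splits)
      ultimately show ?thesis by simp
    qed
    have XAM: "XA \<in> events" using XAG GM_sub by blast
    have MBM: "MB \<in> events" unfolding MB_def using meas_M(2) by measurable
    have NM: "N \<in> events" using NF CI_M by blast
    have GMM: "GM \<in> events" using GMF CI_M by blast
    have FM: "C \<in> sets (CI t) \<Longrightarrow> C \<in> events" for C using CI_M by blast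
    have eqset: "{w \<in> space M. Xl t w \<in> A \<and> Ml t w \<in> Bs} = XA \<inter> MB"
      unfolding XA_def MB_def by auto
    define c where "c = real_cond_exp M (CI t) (indicator XA)"
    define g where "g = (\<lambda>x. indicator GM x + p * indicator N x :: real)"
    have intI: "integrable M (indicator W :: 'w \<Rightarrow> real)" if "W \<in> events" for W
      using that by (simp add: less_top[symmetric])
    have intXA: "integrable M (indicator XA :: 'w \<Rightarrow> real)" using intI[OF XAM] .
    have c_int: "integrable M c" unfolding c_def by (rule sf.real_cond_exp_int(1)[OF intXA])
    have c_F: "c \<in> borel_measurable (CI t)" unfolding c_def by (rule borel_measurable_cond_exp)
    have intA: "(\<integral>x\<in>W. indicator XA x \<partial>M) = (\<integral>x\<in>W. c x \<partial>M)" if "W \<in> sets (CI t)" for W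
      unfolding c_def by (rule sf.real_cond_exp_intA[OF intXA that])
    have g_F: "g \<in> borel_measurable (CI t)"
      unfolding g_def using GMF NF by measurable
    have g_int: "integrable M g"
      unfolding g_def by (rule Bochner_Integration.integrable_add[OF intI[OF GMM] integrable_mult_right[OF intI[OF NM]]])
    have gc_eq: "(\<lambda>x. g x * c x) = (\<lambda>x. indicator GM x *\<^sub>R c x + p * (indicator N x *\<^sub>R c x))"
      unfolding g_def by (rule ext) (simp add: algebra_simps)
    have gc_int: "integrable M (\<lambda>x. g x * c x)"
      unfolding gc_eq
      by (rule Bochner_Integration.integrable_add[OF integrable_mult_indicator[OF GMM c_int]
                integrable_mult_right[OF integrable_mult_indicator[OF NM c_int]]])
    have split: "measure M (C \<inter> Y \<inter> MB) = measure M (C \<inter> GM \<inter> Y) + p * measure M (C \<inter> N \<inter> Y)"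
      if C: "C \<in> sets (CI t)" and Y: "Y \<in> sets G" for C Y
    proof -
      have Csp: "C \<subseteq> space M" using FM[OF C] sets.sets_into_space by blast
      have YM: "Y \<in> events" using Y GM_sub by blast
      have u: "C \<inter> Y \<inter> MB = (C \<inter> GM \<inter> Y) \<union> (C \<inter> N \<inter> Y \<inter> MB)"
        using Csp unfolding GM_def N_def MB_def by auto
      have d: "(C \<inter> GM \<inter> Y) \<inter> (C \<inter> N \<inter> Y \<inter> MB) = {}"
        unfolding GM_def N_def by auto
      have "measure M (C \<inter> Y \<inter> MB) = measure M (C \<inter> GM \<inter> Y) + measure M (C \<inter> N \<inter> Y \<inter> MB)"
        unfolding u by (rule finite_measure_Union[OF _ _ d]) (use FM[OF C] GMM YM NM MBM in auto)
      also have "measure M (C \<inter> N \<inter> Y \<inter> MB) = p * measure M (C \<inter> N \<inter> Y)"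
        unfolding p_def by (rule core[OF C Y MBE])
      finally show ?thesis .
    qed
    have GMsp: "GM \<inter> space M = GM" unfolding GM_def by auto
    have Nsp: "N \<inter> space M = N" unfolding N_def by auto
    have AE1: "AE x in M. real_cond_exp M (CI t) (indicator MB) x = g x"
    proof (rule sf.real_cond_exp_charact[OF _ intI[OF MBM] g_int g_F])
      fix C assume C: "C \<in> sets (CI t)"
      have CM: "C \<in> events" using FM[OF C] .
      have "(\<integral>x\<in>C. g x \<partial>M) = (\<integral>x. indicator (C \<inter> GM) x + p * indicator (C \<inter> N) x \<partial>M)"
        unfolding set_lebesgue_integral_def g_def
        by (rule Bochner_Integration.integral_cong) (auto simp: indicator_def)
      also have "\<dots> = measure M (C \<inter> GM) + p * measure M (C \<inter> N)"
        using CM GMM NM by (subst Bochner_Integration.integral_add) (auto intro!: intI simp: Int_absorb2 sets.sets_into_space)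
      also have "\<dots> = measure M (C \<inter> space M \<inter> MB)"
        using split[OF C spG] by (simp add: Int_assoc GMsp Nsp)
      also have "\<dots> = (\<integral>x\<in>C. indicator MB x \<partial>M)"
        using set_int_ind[OF CM MBM] CM sets.sets_into_space by (simp add: Int_absorb2)
      finally show "(\<integral>x\<in>C. indicator MB x \<partial>M) = (\<integral>x\<in>C. g x \<partial>M)" by simp
    qed
    have AE2: "AE x in M. real_cond_exp M (CI t) (indicator (XA \<inter> MB)) x = g x * c x"
    proof (rule sf.real_cond_exp_charact[OF _ intI gc_int])
      fix C assume C: "C \<in> sets (CI t)"
      have CM: "C \<in> events" using FM[OF C] .
      have CGF: "C \<inter> GM \<in> sets (CI t)" using C GMF by blast
      have CNF: "C \<inter> N \<in> sets (CI t)" using C NF by blast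
      have "(\<integral>x\<in>C. g x * c x \<partial>M)
          = (\<integral>x. indicator (C \<inter> GM) x *\<^sub>R c x + p * (indicator (C \<inter> N) x *\<^sub>R c x) \<partial>M)"
        unfolding set_lebesgue_integral_def g_def
        by (rule Bochner_Integration.integral_cong) (auto simp: indicator_def algebra_simps)
      also have "\<dots> = (\<integral>x\<in>C \<inter> GM. c x \<partial>M) + p * (\<integral>x\<in>C \<inter> N. c x \<partial>M)"
        unfolding set_lebesgue_integral_def
      proof -
        have i1: "integrable M (\<lambda>x. indicator (C \<inter> GM) x *\<^sub>R c x)"
          by (rule integrable_mult_indicator[OF _ c_int]) (use CM GMM in blast)
        have i2: "integrable M (\<lambda>x. indicator (C \<inter> N) x *\<^sub>R c x)"
          by (rule integrable_mult_indicator[OF _ c_int]) (use CM NM in blast)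
        show "(\<integral>x. indicator (C \<inter> GM) x *\<^sub>R c x + p * (indicator (C \<inter> N) x *\<^sub>R c x) \<partial>M) =
          (\<integral>x. indicator (C \<inter> GM) x *\<^sub>R c x \<partial>M) + p * (\<integral>x. indicator (C \<inter> N) x *\<^sub>R c x \<partial>M)"
          by (subst Bochner_Integration.integral_add[OF i1 integrable_mult_right[OF i2]]) simp
      qed
      also have "\<dots> = (\<integral>x\<in>C \<inter> GM. indicator XA x \<partial>M) + p * (\<integral>x\<in>C \<inter> N. indicator XA x \<partial>M)"
        using intA[OF CGF] intA[OF CNF] by simp
      also have "\<dots> = measure M (C \<inter> GM \<inter> XA) + p * measure M (C \<inter> N \<inter> XA)"
        using set_int_ind[OF FM[OF CGF] XAM] set_int_ind[OF FM[OF CNF] XAM] by simp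
      also have "\<dots> = measure M (C \<inter> XA \<inter> MB)"
        using split[OF C XAG] by simp
      also have "\<dots> = (\<integral>x\<in>C. indicator (XA \<inter> MB) x \<partial>M)"
        using set_int_ind[of C M "XA \<inter> MB"] CM XAM MBM by (simp add: Int_assoc)
      finally show "(\<integral>x\<in>C. indicator (XA \<inter> MB) x \<partial>M) = (\<integral>x\<in>C. g x * c x \<partial>M)" by simp
    next
      show "(\<lambda>x. g x * c x) \<in> borel_measurable (CI t)" using g_F c_F by measurable
      show "XA \<inter> MB \<in> events" using XAM MBM by blast
    qed
    show "AE \<omega> in M. real_cond_exp M (CI t) (indicator {w \<in> space M. Xl t w \<in> A \<and> Ml t w \<in> Bs}) \<omega> =
          real_cond_exp M (CI t) (indicator {w \<in> space M. Xl t w \<in> A}) \<omega> *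
          real_cond_exp M (CI t) (indicator {w \<in> space M. Ml t w \<in> Bs}) \<omega>"
      unfolding eqset XA_def[symmetric] MB_def[symmetric] c_def[symmetric]
      using AE1 AE2 by eventually_elim (simp add: mult.commute)
  qed
qed

end
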